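(* Let $G$ be a digraph and let $\alpha^{(n+1)}>\gamma^{(n)}>\beta^{(n-1)}$ be allowed elementary paths on $G$ (of lengths $n+1,n,n-1$) such that their starting vertices are not all the same or their end vertices are not all the same. Write $\alpha=v_0v_1\cdots v_{n+1}$. Then either (a) there exists an allowed elementary $n$-path $\gamma'\neq\gamma$ with $\alpha>\gamma'>\beta$; or (b) $\beta$ is obtained from $\alpha$ by removing $v_0\to v_1$ or by removing $v_n\to v_{n+1}$.
   Context: A digraph $G=(V,E)$ consists of a set $V$ and $E\subseteq(V\times V)\setminus\{(v,v)\}$; $(u,v)\in E$ is written $u\to v$. An allowed elementary $n$-path is a sequence $v_0\cdots v_n$ of vertices with $v_{i-1}\to v_i\in E$ for $1\le i\le n$. For allowed elementary paths, $\gamma'<\gamma$ (equivalently $\gamma>\gamma'$) means $\gamma'$ is obtained from $\gamma$ by deleting some of its entries. *)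

theory Defs
  imports Main "HOL-Library.Sublist"
begin

definition digraph :: "'a set \<Rightarrow> ('a \<times> 'a) set \<Rightarrow> bool" where
  "digraph V E \<longleftrightarrow> E \<subseteq> (V \<times> V) - {(v, v) | v. True}"

definition allowed_path :: "'a set \<Rightarrow> ('a \<times> 'a) set \<Rightarrow> nat \<Rightarrow> 'a list \<Rightarrow> bool" where
  "allowed_path V E k p \<longleftrightarrow> length p = k + 1 \<and> set p \<subseteq> V \<and>
     (\<forall>i<k. (p ! i, p ! (i + 1)) \<in> E)"

definition path_less :: "'a list \<Rightarrow> 'a list \<Rightarrow> bool" where
  "path_less g' g \<longleftrightarrow> subseq g' g \<and> g' \<noteq> g"

end

theory Submission
  imports Defs
begin

definition del :: "nat \<Rightarrow> 'a list \<Rightarrow> 'a list" where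
  "del i xs = take i xs @ drop (Suc i) xs"

lemma del_length: "i < length xs \<Longrightarrow> length (del i xs) = length xs - 1"
  unfolding del_def by auto

lemma del_nth: "i < length xs \<Longrightarrow> k < length xs - 1 \<Longrightarrow>
  del i xs ! k = (if k < i then xs ! k else xs ! Suc k)"
  unfolding del_def by (auto simp: nth_append min_def)

lemma subseq_del: "subseq (del i xs) xs"
proof -
  have "subseq (drop (Suc i) xs) (drop i xs)"
    by (cases "i < length xs") (auto simp: Cons_nth_drop_Suc[symmetric])
  then show ?thesis unfolding del_def
    by (metis append_take_drop_id subseq_append')
qed

lemma subseq_ex_del:
  "subseq xs ys \<Longrightarrow> length ys = Suc (length xs) \<Longrightarrow> \<exists>i<length ys. xs = del i ys"
proof (induction ys arbitrary: xs)
  case Nil then show ?case by simp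
next
  case (Cons y ys)
  show ?case
  proof (cases xs)
    case Nil
    then show ?thesis using Cons.prems by (auto simp: del_def intro!: exI[of _ 0])
  next
    case (Cons x xs')
    show ?thesis
    proof (cases "subseq xs ys")
      case True
      then have "xs = ys" using Cons.prems by (simp add: subseq_same_length)
      then show ?thesis by (auto simp: del_def intro!: exI[of _ 0])
    next
      case False
      then have "x = y" "subseq xs' ys" using Cons.prems \<open>xs = x # xs'\<close>
        by (auto split: if_splits)
      then obtain i where "i < length ys" "xs' = del i ys"
        using Cons.IH Cons.prems \<open>xs = x # xs'\<close> by auto
      then show ?thesis using \<open>xs = x # xs'\<close> \<open>x = y\<close>
        by (auto simp: del_def intro!: exI[of _ "Suc i"])
    qed
  qed
qed

lemma del_del: "a \<le> b \<Longrightarrow> Suc b < length xs \<Longrightarrow> del b (del a xs) = del a (del (Suc b) xs)"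
  by (rule nth_equalityI) (auto simp: del_length del_nth nth_append min_def)


lemma allowed_del:
  assumes "allowed_path V E (Suc k) xs" "m \<le> Suc k"
    and "0 < m \<Longrightarrow> m < Suc k \<Longrightarrow> (xs!(m-1), xs!(m+1)) \<in> E"
  shows "allowed_path V E k (del m xs)"
proof -
  have len: "length xs = Suc (Suc k)" using assms(1) by (simp add: allowed_path_def)
  have "set (del m xs) \<subseteq> set xs" unfolding del_def
    using set_take_subset set_drop_subset by fastforce
  moreover have "(del m xs ! i, del m xs ! (i + 1)) \<in> E" if "i < k" for i
  proof -
    have e: "\<And>j. j < Suc k \<Longrightarrow> (xs ! j, xs ! (j+1)) \<in> E"
      using assms(1) by (simp add: allowed_path_def)
    have d1: "del m xs ! i = (if i < m then xs ! i else xs ! Suc i)"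
      using del_nth[of m xs i] len assms(2) that by simp
    have d2: "del m xs ! (i+1) = (if i + 1 < m then xs ! (i+1) else xs ! Suc (i+1))"
      using del_nth[of m xs "i+1"] len assms(2) that by simp
    show ?thesis
    proof (cases "i + 1 < m")
      case True then show ?thesis using d1 d2 e[of i] that by simp
    next
      case False
      show ?thesis
      proof (cases "i + 1 = m")
        case True
        then have "m = Suc i" by simp
        then show ?thesis using d1 d2 assms(3) that by simp
      next
        case False
        then show ?thesis using d1 d2 e[of "Suc i"] that \<open>\<not> i + 1 < m\<close> by simp
      qed
    qed
  qed
  ultimately show ?thesis using assms(1) len del_length[of m xs] assms(2)
    by (auto simp: allowed_path_def)
qed

theorem lemma2p2:
  fixes V :: "'a set" and E :: "('a \<times> 'a) set" and n :: nat
    and \<alpha> \<gamma> \<beta> :: "'a list"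
  assumes "digraph V E"
    and "n \<ge> 1"
    and "allowed_path V E (n + 1) \<alpha>"
    and "allowed_path V E n \<gamma>"
    and "allowed_path V E (n - 1) \<beta>"
    and "path_less \<gamma> \<alpha>" and "path_less \<beta> \<gamma>"
    and "\<not> (hd \<alpha> = hd \<gamma> \<and> hd \<gamma> = hd \<beta>) \<or> \<not> (last \<alpha> = last \<gamma> \<and> last \<gamma> = last \<beta>)"
  shows "(\<exists>\<gamma>'. allowed_path V E n \<gamma>' \<and> \<gamma>' \<noteq> \<gamma> \<and> path_less \<gamma>' \<alpha> \<and> path_less \<beta> \<gamma>')
         \<or> \<beta> = drop 2 \<alpha> \<or> \<beta> = take n \<alpha>"
proof -
  have la: "length \<alpha> = n + 2" and lg: "length \<gamma> = n + 1" and lb: "length \<beta> = n"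
    using assms(2-5) by (auto simp: allowed_path_def)
  have eA: "\<And>j. j < n + 1 \<Longrightarrow> (\<alpha> ! j, \<alpha> ! (j+1)) \<in> E"
    using assms(3) by (simp add: allowed_path_def)
  have eB: "\<And>j. j < n - 1 \<Longrightarrow> (\<beta> ! j, \<beta> ! (j+1)) \<in> E"
    using assms(5) by (simp add: allowed_path_def)
  have noloop: "\<And>x y. (x, y) \<in> E \<Longrightarrow> x \<noteq> y"
    using assms(1) by (auto simp: digraph_def)
  obtain i where i: "i < n + 2" "\<gamma> = del i \<alpha>"
    using subseq_ex_del[of \<gamma> \<alpha>] assms(6) la lg by (auto simp: path_less_def)
  obtain j where j: "j < n + 1" "\<beta> = del j \<gamma>"
    using subseq_ex_del[of \<beta> \<gamma>] assms(7) lb lg by (auto simp: path_less_def)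
  obtain a b where ab: "a < b" "b < n + 2" "\<beta> = del a (del b \<alpha>)"
    "\<gamma> = del a \<alpha> \<or> \<gamma> = del b \<alpha>"
  proof (cases "j < i")
    case True
    have "\<beta> = del j (del i \<alpha>)" using i j by simp
    then show ?thesis using that[of j i] True i by auto
  next
    case False
    have "\<beta> = del i (del (Suc j) \<alpha>)" using i j del_del[of i j \<alpha>] False la by simp
    then show ?thesis using that[of i "Suc j"] False i j by auto
  qed
  have beta2: "\<beta> = del (b - 1) (del a \<alpha>)"
    using ab del_del[of a "b - 1" \<alpha>] la by simp
  have ab2: "a = 0 \<or> b = n + 1"
  proof (rule ccontr)
    assume "\<not> (a = 0 \<or> b = n + 1)"
    then have "0 < a" "b \<le> n" using ab by auto
    have lda: "length (del a \<alpha>) = n + 1" "length (del b \<alpha>) = n + 1"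
      using ab la del_length[of a \<alpha>] del_length[of b \<alpha>] by auto
    have ne: "\<alpha> \<noteq> []" "del a \<alpha> \<noteq> []" "del b \<alpha> \<noteq> []" "\<beta> \<noteq> []"
      using la lda lb assms(2) by auto
    have hA: "hd (del a \<alpha>) = \<alpha> ! 0" "hd (del b \<alpha>) = \<alpha> ! 0"
      using ne \<open>0 < a\<close> ab la del_nth[of a \<alpha> 0] del_nth[of b \<alpha> 0]
      by (auto simp: hd_conv_nth)
    have hB: "hd \<beta> = \<alpha> ! 0"
      using ne \<open>0 < a\<close> ab la lda del_nth[of a "del b \<alpha>" 0] del_nth[of b \<alpha> 0] assms(2)
      by (auto simp: hd_conv_nth)
    have lA: "last (del a \<alpha>) = \<alpha> ! (n+1)" "last (del b \<alpha>) = \<alpha> ! (n+1)"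
      using ne \<open>b \<le> n\<close> ab la lda del_nth[of a \<alpha> n] del_nth[of b \<alpha> n]
      by (auto simp: last_conv_nth)
    have lB: "last \<beta> = \<alpha> ! (n+1)"
      using ne \<open>b \<le> n\<close> ab la lda lb del_nth[of a "del b \<alpha>" "n - 1"] del_nth[of b \<alpha> n] assms(2)
      by (auto simp: last_conv_nth)
    have "hd \<alpha> = \<alpha> ! 0" "last \<alpha> = \<alpha> ! (n+1)" using ne la by (auto simp: hd_conv_nth last_conv_nth)
    then have "hd \<alpha> = hd \<gamma> \<and> hd \<gamma> = hd \<beta>" "last \<alpha> = last \<gamma> \<and> last \<gamma> = last \<beta>"
      using hA hB lA lB ab(4) by auto
    then show False using assms(8) by simp
  qed
  define \<gamma>' where "\<gamma>' = (if \<gamma> = del a \<alpha> then del b \<alpha> else del a \<alpha>)"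
  have neq: "del a \<alpha> \<noteq> del b \<alpha>"
  proof
    assume h: "del a \<alpha> = del b \<alpha>"
    have "del a \<alpha> ! a = \<alpha> ! (a+1)" "del b \<alpha> ! a = \<alpha> ! a"
      using ab la by (auto simp: del_nth)
    then show False using h eA[of a] noloop ab by auto
  qed
  show ?thesis
  proof (cases "(a = 0 \<and> b = 1) \<or> (a = n \<and> b = n + 1)")
    case True
    then show ?thesis
    proof
      assume "a = 0 \<and> b = 1"
      then have "\<beta> = drop 2 \<alpha>" using ab la lb
        by (intro nth_equalityI) (auto simp: del_nth del_length)
      then show ?thesis by simp
    next
      assume "a = n \<and> b = n + 1"
      then have "\<beta> = take n \<alpha>" using ab la lb
        by (intro nth_equalityI) (auto simp: del_nth del_length)
      then show ?thesis by simp
    qed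
  next
    case False
    have alA: "allowed_path V E n (del a \<alpha>)"
    proof (rule allowed_del)
      show "allowed_path V E (Suc n) \<alpha>" using assms(3) by simp
      show "a \<le> Suc n" using ab by simp
      assume "0 < a" "a < Suc n"
      then have "b = n + 1" using ab2 by simp
      have "\<beta> ! (a-1) = \<alpha> ! (a-1)" "\<beta> ! a = \<alpha> ! (a+1)"
        using ab la \<open>0 < a\<close> \<open>b = n + 1\<close> \<open>a < Suc n\<close> False
          del_nth[of a "del b \<alpha>" a] del_nth[of b \<alpha> "a+1"] del_nth[of a "del b \<alpha>" "a-1"] del_nth[of b \<alpha> "a-1"]
          del_length[of b \<alpha>] by auto
      moreover have "a - 1 < n - 1" using False \<open>0 < a\<close> \<open>b = n + 1\<close> \<open>a < Suc n\<close> by auto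
      ultimately show "(\<alpha> ! (a - 1), \<alpha> ! (a + 1)) \<in> E" using eB[of "a-1"] \<open>0 < a\<close> by simp
    qed
    have alB: "allowed_path V E n (del b \<alpha>)"
    proof (rule allowed_del)
      show "allowed_path V E (Suc n) \<alpha>" using assms(3) by simp
      show "b \<le> Suc n" using ab by simp
      assume "0 < b" "b < Suc n"
      then have "a = 0" using ab2 by simp
      have b2: "2 \<le> b" using False \<open>a = 0\<close> ab by auto
      have b3: "Suc (b - 2) = b - 1" using b2 by simp
      have "\<beta> ! (b-2) = \<alpha> ! (b-1)" "\<beta> ! (b-1) = \<alpha> ! (b+1)"
        using ab la \<open>a = 0\<close> \<open>b < Suc n\<close> b2 b3 by (auto simp: del_nth del_length)
      moreover have "b - 2 < n - 1" using False \<open>a = 0\<close> \<open>b < Suc n\<close> ab by auto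
      moreover have "b - 2 + 1 = b - 1" using False \<open>a = 0\<close> ab by auto
      ultimately show "(\<alpha> ! (b - 1), \<alpha> ! (b + 1)) \<in> E" using eB[of "b-2"] by simp
    qed
    have lda: "length (del a \<alpha>) = n + 1" "length (del b \<alpha>) = n + 1"
      using ab la del_length[of a \<alpha>] del_length[of b \<alpha>] by auto
    have "allowed_path V E n \<gamma>' \<and> \<gamma>' \<noteq> \<gamma> \<and> path_less \<gamma>' \<alpha> \<and> path_less \<beta> \<gamma>'"
    proof (cases "\<gamma> = del a \<alpha>")
      case True
      then have g: "\<gamma>' = del b \<alpha>" by (simp add: \<gamma>'_def)
      have "subseq \<gamma>' \<alpha>" "subseq \<beta> \<gamma>'" using g ab(3) subseq_del by auto
      moreover have "\<gamma>' \<noteq> \<alpha>" "\<beta> \<noteq> \<gamma>'" using g lda la lb by auto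
      ultimately show ?thesis using g True neq alB by (simp add: path_less_def)
    next
      case False
      then have g: "\<gamma>' = del a \<alpha>" "\<gamma> = del b \<alpha>" using ab(4) by (auto simp: \<gamma>'_def)
      have "subseq \<gamma>' \<alpha>" "subseq \<beta> \<gamma>'" using g beta2 subseq_del by auto
      moreover have "\<gamma>' \<noteq> \<alpha>" "\<beta> \<noteq> \<gamma>'" using g lda la lb by auto
      ultimately show ?thesis using g neq alA by (simp add: path_less_def)
    qed
    then show ?thesis by blast
  qed
qed

end
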